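(* Let $q>0$, and let $\mathbf m$, $\mathbf n$ be proper paths for $q$ with $c(q,\mathbf m)=c(q,\mathbf n)$. Then there is a proper loop $\mathbf u$ for $q$ such that $\mathbf m=(\mathbf u\mathbf n)^*$. Moreover, $\mathbf u$ is different from the trivial loop $(0)$ if and only if $\mathbf m\ne\mathbf n$.
   Context: Let $q>0$. For $k\ge0$ and $\mathbf m=(m_0,\dots,m_k)\in\mathbb Z^{k+1}$ put $\mathbf m_j=(m_0,\dots,m_j)$; define $c(q,\mathbf m_0)=m_0$ and $c(q,\mathbf m_j)=m_j+\frac{1}{q\,c(q,\mathbf m_{j-1})}$ for $1\le j\le k$. $\mathbf m$ is a path for $q$ of length $k$ if $c(q,\mathbf m_j)\ne0$ for $0\le j\le k-1$; it is proper if $m_j\ne0$ for $0\le j\le k-1$. A loop is a path with $c(q,\mathbf m)=0$; $(0)$ is the trivial loop. The composition of $\mathbf u=(u_0,\dots,u_k)$ and $\mathbf n=(n_0,\dots,n_\ell)$ is $\mathbf u\mathbf n=(u_0,\dots,u_{k-1},u_k+n_0,n_1,\dots,n_\ell)$. Zero-skipping: for a path with an entry $m_j=0$, $1\le j\le k-1$, replace $(\dots,m_{j-1},0,m_{j+1},\dots)$ by $(\dots,m_{j-1}+m_{j+1},\dots)$ (this does not change $c(q,\cdot)$); repeating this until no such interior zero remains gives a proper path denoted $\mathbf m^*$. *)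

theory Defs
  imports Main "HOL.Real"
begin

text \<open>A vector m = (m_0,...,m_k) is represented by a nonempty list of integers.
  cval q m is c(q, m): c(q,(m_0)) = m_0, c(q, m_j) = m_j + 1/(q c(q, m_{j-1})).\<close>

fun cval_aux :: "real \<Rightarrow> real \<Rightarrow> int list \<Rightarrow> real" where
  "cval_aux q acc [] = acc"
| "cval_aux q acc (x # xs) = cval_aux q (of_int x + 1 / (q * acc)) xs"

definition cval :: "real \<Rightarrow> int list \<Rightarrow> real" where
  "cval q m = cval_aux q (of_int (hd m)) (tl m)"

definition is_path :: "real \<Rightarrow> int list \<Rightarrow> bool" where
  "is_path q m \<longleftrightarrow> m \<noteq> [] \<and> (\<forall>j. j + 1 < length m \<longrightarrow> cval q (take (j + 1) m) \<noteq> 0)"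

definition proper_path :: "real \<Rightarrow> int list \<Rightarrow> bool" where
  "proper_path q m \<longleftrightarrow> is_path q m \<and> (\<forall>j. j + 1 < length m \<longrightarrow> m ! j \<noteq> 0)"

definition is_loop :: "real \<Rightarrow> int list \<Rightarrow> bool" where
  "is_loop q m \<longleftrightarrow> is_path q m \<and> cval q m = 0"

definition compose :: "int list \<Rightarrow> int list \<Rightarrow> int list" where
  "compose u n = butlast u @ [last u + hd n] @ tl n"

inductive zskip_step :: "int list \<Rightarrow> int list \<Rightarrow> bool" where
  "zskip_step (xs @ [a, 0, b] @ ys) (xs @ [a + b] @ ys)"

definition no_interior_zero :: "int list \<Rightarrow> bool" where
  "no_interior_zero m \<longleftrightarrow> (\<forall>j. 1 \<le> j \<and> j + 1 < length m \<longrightarrow> m ! j \<noteq> 0)"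

text \<open>zs_star x y: y is x^*, i.e. y arises from x by repeated zero-skipping until
  no interior zero remains.\<close>
definition zs_star :: "int list \<Rightarrow> int list \<Rightarrow> bool" where
  "zs_star x y \<longleftrightarrow> zskip_step\<^sup>*\<^sup>* x y \<and> no_interior_zero y"

end

theory Submission
  imports Defs
begin

lemma cval_single[simp]: "cval q [x] = of_int x" by (simp add: cval_def)
lemma cval_aux_snoc: "cval_aux q acc (xs @ [x]) = of_int x + 1/(q * cval_aux q acc xs)"
  by (induction xs arbitrary: acc) auto
lemma cval_snoc: "xs \<noteq> [] \<Longrightarrow> cval q (xs @ [x]) = of_int x + 1/(q * cval q xs)"
  by (cases xs) (auto simp: cval_def cval_aux_snoc)
lemma cval_snoc_minus: "cval q (B @ [x - c]) = cval q (B @ [x]) - of_int c"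
  by (cases "B = []") (auto simp: cval_snoc)

lemma proper_entries: "(\<forall>j. j + 1 < length m \<longrightarrow> m ! j \<noteq> 0) \<longleftrightarrow> 0 \<notin> set (butlast m)"
  by (auto simp: in_set_conv_nth nth_butlast)

lemma is_path_alt: "is_path q m \<longleftrightarrow> m \<noteq> [] \<and> (\<forall>i. 0 < i \<and> i < length m \<longrightarrow> cval q (take i m) \<noteq> 0)"
proof -
  have "(\<forall>j. j+1<length m \<longrightarrow> P (j+1)) \<longleftrightarrow> (\<forall>i. 0<i \<and> i<length m \<longrightarrow> P i)" for P
    by (metis Suc_eq_plus1 gr0_implies_Suc zero_less_Suc)
  from this[of "\<lambda>i. cval q (take i m) \<noteq> 0"] show ?thesis unfolding is_path_def by simp
qed

lemma inv_inv: "(q::real) \<noteq> 0 \<Longrightarrow> 1/(q*(1/(q*x))) = x"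
  by (cases "x = 0") (auto simp: field_simps)

lemma lemA:
  assumes "Z \<noteq> []" "P \<noteq> []" "q \<noteq> 0" "cval q P = 1/(q * cval q (Z @ ys))"
  shows "cval q (P @ map uminus (rev ys)) = 1/(q * cval q Z)"
  using assms(2,4)
proof (induction ys arbitrary: P rule: rev_induct)
  case Nil then show ?case by simp
next
  case (snoc y ys)
  have "cval q (P @ [-y]) = 1/(q * cval q (Z @ ys))"
    using snoc.prems assms(1,3) cval_snoc[of "Z @ ys" q y] cval_snoc[of P q "-y"] inv_inv[of q] by simp
  then have "cval q ((P @ [-y]) @ map uminus (rev ys)) = 1/(q * cval q Z)"
    using snoc.IH[of "P @ [-y]"] by simp
  then show ?case by simp
qed

lemma zs_lemma: "zskip_step\<^sup>*\<^sup>* (P @ [a] @ map uminus (rev ys) @ [0] @ ys @ [b]) (P @ [a+b])"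
proof (induction ys)
  case Nil
  show ?case using zskip_step.intros[of P a b "[]"] by simp
next
  case (Cons y ys)
  have "zskip_step (P @ [a] @ map uminus (rev ys) @ [-y, 0, y] @ ys @ [b])
          (P @ [a] @ map uminus (rev ys) @ [0] @ ys @ [b])"
    using zskip_step.intros[of "P @ [a] @ map uminus (rev ys)" "-y" y "ys @ [b]"] by simp
  then show ?case using Cons by simp
qed

lemma zskip_app: "zskip_step x y \<Longrightarrow> zskip_step (x @ z) (y @ z)"
  by (induction rule: zskip_step.induct) (metis append.assoc zskip_step.intros)

lemma zskip_star_app: "zskip_step\<^sup>*\<^sup>* x y \<Longrightarrow> zskip_step\<^sup>*\<^sup>* (x @ z) (y @ z)"
  by (induction rule: rtranclp_induct) (auto intro: rtranclp.rtrancl_into_rtrancl zskip_app)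

lemma nz_proper: "proper_path q m \<Longrightarrow> no_interior_zero m"
  by (auto simp: proper_path_def no_interior_zero_def)

lemma main: "q > 0 \<Longrightarrow> proper_path q m \<Longrightarrow> proper_path q n \<Longrightarrow> cval q m = cval q n \<Longrightarrow>
  \<exists>u. proper_path q u \<and> is_loop q u \<and> zs_star (compose u n) m \<and> (u \<noteq> [0] \<longleftrightarrow> m \<noteq> n)"
proof (induction "length m" arbitrary: m n rule: less_induct)
  case less
  have q0: "q \<noteq> 0" using less.prems by simp
  have pm: "is_path q m" and em: "0 \<notin> set (butlast m)"
    using less.prems(2) proper_entries unfolding proper_path_def by auto
  have pn: "is_path q n" and en: "0 \<notin> set (butlast n)"
    using less.prems(3) proper_entries unfolding proper_path_def by auto
  have pm': "\<And>i. 0 < i \<Longrightarrow> i < length m \<Longrightarrow> cval q (take i m) \<noteq> 0"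
    using pm is_path_alt by blast
  have pn': "\<And>i. 0 < i \<Longrightarrow> i < length n \<Longrightarrow> cval q (take i n) \<noteq> 0"
    using pn is_path_alt by blast
  have nzm: "no_interior_zero m" using nz_proper less.prems(2) .
  obtain B a where m: "m = B @ [a]" using pm unfolding is_path_def by (metis rev_exhaust)
  obtain Bn b where n: "n = Bn @ [b]" using pn unfolding is_path_def by (metis rev_exhaust)
  have cm: "cval q (B @ [a - b]) = cval q m - b" using m cval_snoc_minus by simp
  consider (one) "Bn = []" | (neq) "Bn \<noteq> []" "a \<noteq> b" | (eq) "Bn \<noteq> []" "a = b" by blast
  then show ?case
  proof cases
    case one
    define u where "u = B @ [a - b]"
    have "is_path q u" unfolding is_path_alt
    proof (intro conjI allI impI)
      show "u \<noteq> []" by (simp add: u_def)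
      fix i assume "0 < i \<and> i < length u"
      then have "take i u = take i m" "0 < i" "i < length m" by (auto simp: u_def m)
      then show "cval q (take i u) \<noteq> 0" using pm' by simp
    qed
    moreover have "0 \<notin> set (butlast u)" using em by (simp add: u_def m)
    moreover have "cval q u = 0" using cm less.prems(4) by (simp add: u_def n one)
    moreover have "compose u n = m" by (simp add: compose_def u_def n one m)
    moreover have "u \<noteq> [0] \<longleftrightarrow> m \<noteq> n" by (auto simp: u_def m n one)
    ultimately show ?thesis using proper_entries nzm
      unfolding proper_path_def is_loop_def zs_star_def by auto
  next
    case neq
    then obtain n0 ys where Bn: "Bn = n0 # ys" by (cases Bn) auto
    define u where "u = B @ [a - b] @ map uminus (rev ys) @ [-n0]"
    have c1: "cval q (B @ [a - b]) = 1/(q * cval q (n0 # ys))"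
      using cm less.prems(4) cval_snoc[of Bn q b] by (simp add: n Bn)
    have "is_path q u" unfolding is_path_alt
    proof (intro conjI allI impI)
      show "u \<noteq> []" by (simp add: u_def)
      fix i assume i: "0 < i \<and> i < length u"
      show "cval q (take i u) \<noteq> 0"
      proof (cases "i \<le> length B")
        case True
        then have "take i u = take i m" "0 < i" "i < length m" using i by (auto simp: u_def m)
        then show ?thesis using pm' by simp
      next
        case False
        define j where "j = i - length B - 1"
        have j: "j \<le> length ys" using i False by (auto simp: u_def j_def)
        have "i = length B + Suc j" using False by (simp add: j_def)
        then have "take i u = B @ take (Suc j) ((a-b) # map uminus (rev ys) @ [-n0])"
          by (simp add: u_def)
        also have "\<dots> = (B @ [a - b]) @ map uminus (take j (rev ys))"
          using j by (simp add: take_map)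
        finally have "take i u = (B @ [a - b]) @ map uminus (take j (rev ys))" .
        also have "take j (rev ys) = rev (drop (length ys - j) ys)"
          using j by (simp add: rev_drop)
        finally have tu: "take i u = (B @ [a - b]) @ map uminus (rev (drop (length ys - j) ys))" .
        define k where "k = length ys - j"
        have "cval q (take i u) = 1/(q * cval q (n0 # take k ys))"
          unfolding tu k_def[symmetric]
          by (rule lemA) (use c1 q0 in auto)
        moreover have "take (k+1) n = n0 # take k ys" by (simp add: n Bn k_def)
        moreover have "cval q (take (k+1) n) \<noteq> 0" by (rule pn') (auto simp: n Bn k_def)
        ultimately show ?thesis using q0 by simp
      qed
    qed
    moreover have "0 \<notin> set (butlast u)" using em en neq
      by (auto simp add: u_def m n Bn butlast_append)
    moreover have "cval q u = 0"
    proof -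
      have "cval q ((B @ [a - b]) @ map uminus (rev ys)) = 1/(q * cval q [n0])"
        by (rule lemA) (use c1 q0 in auto)
      then have "cval q ((B @ [a - b] @ map uminus (rev ys)) @ [-n0]) = 0"
        using cval_snoc[of "B @ [a - b] @ map uminus (rev ys)" q "-n0"] inv_inv[OF q0] by simp
      then show ?thesis by (simp add: u_def)
    qed
    moreover have "zskip_step\<^sup>*\<^sup>* (compose u n) m"
    proof -
      have "compose u n = B @ [a - b] @ map uminus (rev ys) @ [0] @ ys @ [b]"
        by (simp add: compose_def u_def n Bn butlast_append)
      then show ?thesis using zs_lemma[of B "a - b" ys b] by (simp add: m)
    qed
    moreover have "u \<noteq> [0]" by (simp add: u_def)
    moreover have "m \<noteq> n" using neq by (simp add: m n)
    ultimately show ?thesis using proper_entries nzm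
      unfolding proper_path_def is_loop_def zs_star_def by auto
  next
    case eq
    have cBn: "cval q Bn \<noteq> 0" using pn'[of "length Bn"] eq by (simp add: n)
    have Bne: "B \<noteq> []"
    proof
      assume "B = []"
      then have "of_int a = of_int b + 1/(q * cval q Bn)"
        using less.prems(4) cval_snoc[of Bn q b] eq by (simp add: m n)
      then have "1/(q * cval q Bn) = 0" using eq by simp
      then show False using cBn q0 by simp
    qed
    have "1/(q * cval q B) = 1/(q * cval q Bn)"
      using less.prems(4) cval_snoc[of Bn q b] cval_snoc[of B q a] eq Bne by (auto simp: m n)
    then have cv: "cval q B = cval q Bn" using q0 by (simp add: field_simps)
    have "proper_path q B"
    proof -
      have "is_path q B" unfolding is_path_alt
      proof (intro conjI allI impI)
        show "B \<noteq> []" by fact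
        fix i assume "0 < i \<and> i < length B"
        then have "take i B = take i m" "0 < i" "i < length m" by (auto simp: m)
        then show "cval q (take i B) \<noteq> 0" using pm' by simp
      qed
      moreover have "0 \<notin> set (butlast B)" using em by (auto simp: m dest: in_set_butlastD)
      ultimately show ?thesis using proper_entries unfolding proper_path_def by auto
    qed
    moreover have "proper_path q Bn"
    proof -
      have "is_path q Bn" unfolding is_path_alt
      proof (intro conjI allI impI)
        show "Bn \<noteq> []" by (fact eq(1))
        fix i assume "0 < i \<and> i < length Bn"
        then have "take i Bn = take i n" "0 < i" "i < length n" by (auto simp: n)
        then show "cval q (take i Bn) \<noteq> 0" using pn' by simp
      qed
      moreover have "0 \<notin> set (butlast Bn)" using en by (auto simp: n dest: in_set_butlastD)
      ultimately show ?thesis using proper_entries unfolding proper_path_def by auto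
    qed
    moreover have "length B < length m" by (simp add: m)
    ultimately obtain u where u: "proper_path q u" "is_loop q u" "zs_star (compose u Bn) B"
      "u \<noteq> [0] \<longleftrightarrow> B \<noteq> Bn"
      using less.hyps less.prems(1) cv by blast
    have "compose u n = compose u Bn @ [b]"
      using eq(1) by (cases Bn) (auto simp: compose_def n)
    then have "zskip_step\<^sup>*\<^sup>* (compose u n) m"
      using zskip_star_app[of "compose u Bn" B "[b]"] u(3) eq by (simp add: zs_star_def m)
    moreover have "B \<noteq> Bn \<longleftrightarrow> m \<noteq> n" using eq by (simp add: m n)
    ultimately show ?thesis using u nzm unfolding zs_star_def by auto
  qed
qed

theorem lemma3:
  fixes q :: real and m n :: "int list"
  assumes "q > 0"
    and "proper_path q m" and "proper_path q n"
    and "cval q m = cval q n"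
  shows "\<exists>u. proper_path q u \<and> is_loop q u \<and> zs_star (compose u n) m
             \<and> (u \<noteq> [0] \<longleftrightarrow> m \<noteq> n)"
  using main assms by blast

end
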